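(* Let $X$ be a space having the metric sparsification property with constant $c\in(0,1]$ and function $f:\mathbb{N}\to\mathbb{N}$. Then for every $\omega\in\partial X$, the limit space $(X(\omega),d_\omega)$ has the metric sparsification property with the same constant $c$ and the same function $f$.
   Context: A *space* is a metric space $(X,d)$ that is strongly discrete (the set $\{d(x,y):x,y\in X\}$ is a discrete subset of $\mathbb{R}$) and has bounded geometry (for every $r>0$, $\sup_{x\in X}|B(x;r)|<\infty$). Metric sparsification property (MSP) with constant $c\in(0,1]$: there is a non-decreasing $f:\mathbb{N}\to\mathbb{N}$ such that for every $m\in\mathbb{N}$ and every finite positive measure $\mu$ on $X$ there is $\Omega=\bigsqcup_{i\in I}\Omega_i\subseteq X$ with $d(\Omega_i,\Omega_j)\ge m$ for $i\ne j$, $\operatorname{diam}(\Omega_i)\le f(m)$ for all $i$, and $\mu(\Omega)\ge c\mu(X)$. Ultrafilters: $\beta X$ is the Stone–Čech compactification (ultrafilters are finitely additive $\omega:\mathcal{P}(X)\to\{0,1\}$ with $\omega(X)=1$), $\partial X=\beta X\setminus X$. If $\omega(D)=1$ and $g:D\to K$, $K$ compact Hausdorff, $\lim_{x\to\omega}g(x)$ is the unique $k$ with $\omega(g^{-1}(U))=1$ for every neighbourhood $U$ of $k$. A partial translation is a bijection $t:D\to R$ between subsets of $X$ with $\sup_{x\in D}d(x,t(x))<\infty$; it is compatible with $\omega$ if $\omega(D)=1$, and then $t(\omega):=\lim_{x\to\omega}t(x)\in\beta X$. $X(\omega)$ is the set of all $t(\omega)$ with $t$ compatible with $\omega$; for a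 compatible family $\{t_\alpha\}_{\alpha\in X(\omega)}$ ($t_\alpha$ compatible with $\omega$, $t_\alpha(\omega)=\alpha$), $d_\omega(\alpha,\beta)=\lim_{x\to\omega}d(t_\alpha(x),t_\beta(x))$ is a metric on $X(\omega)$ independent of the family. *)

theory Defs
  imports "HOL-Analysis.Analysis"
begin

definition metric_on :: "'a set \<Rightarrow> ('a \<Rightarrow> 'a \<Rightarrow> real) \<Rightarrow> bool" where
  "metric_on X d \<longleftrightarrow>
     (\<forall>x\<in>X. \<forall>y\<in>X. 0 \<le> d x y \<and> (d x y = 0 \<longleftrightarrow> x = y) \<and> d x y = d y x) \<and>
     (\<forall>x\<in>X. \<forall>y\<in>X. \<forall>z\<in>X. d x z \<le> d x y + d y z)"

definition distance_set :: "'a set \<Rightarrow> ('a \<Rightarrow> 'a \<Rightarrow> real) \<Rightarrow> real set" where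
  "distance_set X d = {d x y | x y. x \<in> X \<and> y \<in> X}"

definition strongly_discrete :: "'a set \<Rightarrow> ('a \<Rightarrow> 'a \<Rightarrow> real) \<Rightarrow> bool" where
  "strongly_discrete X d \<longleftrightarrow> (\<forall>v\<in>distance_set X d. \<not> v islimpt distance_set X d)"

definition bounded_geometry :: "'a set \<Rightarrow> ('a \<Rightarrow> 'a \<Rightarrow> real) \<Rightarrow> bool" where
  "bounded_geometry X d \<longleftrightarrow>
     (\<forall>r>0. \<exists>N::nat. \<forall>x\<in>X. finite {y\<in>X. d x y \<le> r} \<and> card {y\<in>X. d x y \<le> r} \<le> N)"

definition is_space :: "'a set \<Rightarrow> ('a \<Rightarrow> 'a \<Rightarrow> real) \<Rightarrow> bool" where
  "is_space X d \<longleftrightarrow> metric_on X d \<and> strongly_discrete X d \<and> bounded_geometry X d"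

text \<open>The family P plays the role of the pieces Omega_i; Omega is their union.
  Finite positive measures on S are measures on the power set of S with finite total mass.\<close>
definition msp_with :: "'b set \<Rightarrow> ('b \<Rightarrow> 'b \<Rightarrow> real) \<Rightarrow> real \<Rightarrow> (nat \<Rightarrow> nat) \<Rightarrow> bool" where
  "msp_with S d c f \<longleftrightarrow> mono f \<and>
     (\<forall>(m::nat) (\<mu>::'b measure). space \<mu> = S \<longrightarrow> sets \<mu> = Pow S \<longrightarrow> emeasure \<mu> S < \<infinity> \<longrightarrow>
        (\<exists>P. P \<subseteq> Pow S \<and> disjoint P \<and>
             (\<forall>A\<in>P. \<forall>B\<in>P. A \<noteq> B \<longrightarrow> (\<forall>x\<in>A. \<forall>y\<in>B. real m \<le> d x y)) \<and>
             (\<forall>A\<in>P. \<forall>x\<in>A. \<forall>y\<in>A. d x y \<le> real (f m)) \<and>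
             ennreal c * emeasure \<mu> S \<le> emeasure \<mu> (\<Union>P)))"

text \<open>An ultrafilter on X: a finitely additive {0,1}-valued function on the subsets of X
  with value 1 on X, represented by the collection of sets of value 1.\<close>
definition ultrafilter_on :: "'a set \<Rightarrow> 'a set set \<Rightarrow> bool" where
  "ultrafilter_on X U \<longleftrightarrow> U \<subseteq> Pow X \<and> X \<in> U \<and>
     (\<forall>A B. A \<subseteq> X \<longrightarrow> B \<subseteq> X \<longrightarrow> A \<inter> B = {} \<longrightarrow>
        ((A \<union> B \<in> U \<longleftrightarrow> A \<in> U \<or> B \<in> U) \<and> \<not> (A \<in> U \<and> B \<in> U)))"

definition betaX :: "'a set \<Rightarrow> 'a set set set" where
  "betaX X = {U. ultrafilter_on X U}"

definition principal_uf :: "'a set \<Rightarrow> 'a \<Rightarrow> 'a set set" where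
  "principal_uf X x = {A. A \<subseteq> X \<and> x \<in> A}"

definition boundaryX :: "'a set \<Rightarrow> 'a set set set" where
  "boundaryX X = betaX X - principal_uf X ` X"

definition partial_translation :: "'a set \<Rightarrow> ('a \<Rightarrow> 'a \<Rightarrow> real) \<Rightarrow> 'a set \<Rightarrow> ('a \<Rightarrow> 'a) \<Rightarrow> bool" where
  "partial_translation X d D t \<longleftrightarrow>
     D \<subseteq> X \<and> inj_on t D \<and> t ` D \<subseteq> X \<and> (\<exists>K. \<forall>x\<in>D. d x (t x) \<le> K)"

text \<open>The limit along omega of x |-> t x (viewed in betaX) in the Stone topology of betaX,
  whose basic open sets are {eta. A in eta} for A a subset of X.\<close>
definition translate_uf :: "'a set \<Rightarrow> 'a set set \<Rightarrow> 'a set \<Rightarrow> ('a \<Rightarrow> 'a) \<Rightarrow> 'a set set" where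
  "translate_uf X \<omega> D t =
     (THE \<eta>. \<eta> \<in> betaX X \<and> (\<forall>A. A \<subseteq> X \<longrightarrow> A \<in> \<eta> \<longrightarrow> {x\<in>D. t x \<in> A} \<in> \<omega>))"

definition X_omega :: "'a set \<Rightarrow> ('a \<Rightarrow> 'a \<Rightarrow> real) \<Rightarrow> 'a set set \<Rightarrow> 'a set set set" where
  "X_omega X d \<omega> = {translate_uf X \<omega> D t | D t. partial_translation X d D t \<and> D \<in> \<omega>}"

definition ultralim_real :: "'a set set \<Rightarrow> 'a set \<Rightarrow> ('a \<Rightarrow> real) \<Rightarrow> real" where
  "ultralim_real \<omega> D g = (THE r. \<forall>U. open U \<longrightarrow> r \<in> U \<longrightarrow> {x\<in>D. g x \<in> U} \<in> \<omega>)"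

definition d_omega :: "'a set \<Rightarrow> ('a \<Rightarrow> 'a \<Rightarrow> real) \<Rightarrow> 'a set set \<Rightarrow> 'a set set \<Rightarrow> 'a set set \<Rightarrow> real" where
  "d_omega X d \<omega> \<alpha> \<beta> = (THE r. \<exists>Da ta Db tb.
      partial_translation X d Da ta \<and> Da \<in> \<omega> \<and> translate_uf X \<omega> Da ta = \<alpha> \<and>
      partial_translation X d Db tb \<and> Db \<in> \<omega> \<and> translate_uf X \<omega> Db tb = \<beta> \<and>
      ultralim_real \<omega> (Da \<inter> Db) (\<lambda>x. d (ta x) (tb x)) = r)"

end

theory Submission
  imports Defs
begin

section \<open>Ultrafilter basics\<close>

lemma uf_sub: "ultrafilter_on X U \<Longrightarrow> A \<in> U \<Longrightarrow> A \<subseteq> X"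
  unfolding ultrafilter_on_def by blast

lemma uf_X: "ultrafilter_on X U \<Longrightarrow> X \<in> U"
  unfolding ultrafilter_on_def by blast

lemma uf_disj:
  assumes "ultrafilter_on X U" "A \<subseteq> X" "B \<subseteq> X" "A \<inter> B = {}"
  shows "A \<union> B \<in> U \<longleftrightarrow> A \<in> U \<or> B \<in> U" "\<not> (A \<in> U \<and> B \<in> U)"
  using assms unfolding ultrafilter_on_def by blast+

lemma uf_empty: "ultrafilter_on X U \<Longrightarrow> {} \<notin> U"
proof
  assume u: "ultrafilter_on X U" "{} \<in> U"
  then show False using uf_disj(2)[OF u(1), of "{}" X] uf_X[OF u(1)] by simp
qed

lemma uf_mono: assumes "ultrafilter_on X U" "A \<in> U" "A \<subseteq> B" "B \<subseteq> X" shows "B \<in> U"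
proof -
  have e: "B = A \<union> (B - A)" using assms(3) by blast
  have "A \<subseteq> X" using uf_sub assms by blast
  then have "A \<union> (B - A) \<in> U" using uf_disj(1)[OF assms(1), of A "B - A"] assms by blast
  then show ?thesis using e by simp
qed

lemma uf_compl: assumes "ultrafilter_on X U" "A \<subseteq> X" shows "A \<in> U \<or> X - A \<in> U"
proof -
  have e: "X = A \<union> (X - A)" using assms by blast
  have "A \<union> (X - A) \<in> U" using e uf_X[OF assms(1)] by simp
  then show ?thesis using uf_disj(1)[OF assms(1), of A "X - A"] assms by blast
qed

lemma uf_compl2: assumes "ultrafilter_on X U" "A \<in> U" shows "X - A \<notin> U"
proof -
  have "A \<subseteq> X" using uf_sub assms by blast
  then show ?thesis using uf_disj(2)[OF assms(1), of A "X - A"] assms by blast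
qed

lemma uf_int: assumes "ultrafilter_on X U" "A \<in> U" "B \<in> U" shows "A \<inter> B \<in> U"
proof (rule ccontr)
  assume n: "A \<inter> B \<notin> U"
  have AX: "A \<subseteq> X" "B \<subseteq> X" using uf_sub assms by blast+
  have "(A \<inter> B) \<union> (A - B) = A" by blast
  then have "(A \<inter> B) \<union> (A - B) \<in> U" using assms(2) by simp
  then have "A - B \<in> U" using n uf_disj(1)[OF assms(1), of "A \<inter> B" "A - B"] AX by blast
  then show False using uf_disj(2)[OF assms(1), of "A - B" B] AX assms(3) by blast
qed

lemma uf_Int_finite:
  assumes "ultrafilter_on X U" "finite I" "\<And>i. i \<in> I \<Longrightarrow> A i \<in> U"
  shows "X \<inter> (\<Inter>i\<in>I. A i) \<in> U"
  using assms(2,3)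
proof (induction I rule: finite_induct)
  case empty then show ?case using uf_X[OF assms(1)] by simp
next
  case (insert a F)
  have "X \<inter> (\<Inter>i\<in>insert a F. A i) = A a \<inter> (X \<inter> (\<Inter>i\<in>F. A i))" by blast
  moreover have "A a \<in> U" using insert.prems by simp
  moreover have "X \<inter> (\<Inter>i\<in>F. A i) \<in> U" using insert.IH insert.prems by simp
  ultimately show ?case using uf_int[OF assms(1), of "A a" "X \<inter> (\<Inter>i\<in>F. A i)"] by simp
qed

lemma uf_Un2: assumes "ultrafilter_on X U" "A \<subseteq> X" "B \<subseteq> X" "A \<union> B \<in> U"
  shows "A \<in> U \<or> B \<in> U"
proof (rule ccontr)
  assume "\<not> (A \<in> U \<or> B \<in> U)"
  then have 1: "X - A \<in> U" "X - B \<in> U" using uf_compl[OF assms(1) assms(2)] uf_compl[OF assms(1) assms(3)] by auto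
  then have "(X - A) \<inter> (X - B) \<in> U" using uf_int[OF assms(1)] by blast
  then have "(X - A) \<inter> (X - B) \<inter> (A \<union> B) \<in> U" using uf_int[OF assms(1)] assms(4) by blast
  moreover have "(X - A) \<inter> (X - B) \<inter> (A \<union> B) = {}" by blast
  ultimately show False using uf_empty[OF assms(1)] by simp
qed

lemma uf_Un_finite:
  assumes "ultrafilter_on X U" "finite I" "(\<Union>i\<in>I. A i) \<in> U" "\<And>i. i \<in> I \<Longrightarrow> A i \<subseteq> X"
  shows "\<exists>i\<in>I. A i \<in> U"
  using assms(2,3,4)
proof (induction I rule: finite_induct)
  case empty then show ?case using uf_empty[OF assms(1)] by simp
next
  case (insert a F)
  have "A a \<union> (\<Union>i\<in>F. A i) \<in> U" using insert.prems by simp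
  moreover have "A a \<subseteq> X" "(\<Union>i\<in>F. A i) \<subseteq> X" using insert.prems by auto
  ultimately have "A a \<in> U \<or> (\<Union>i\<in>F. A i) \<in> U" using uf_Un2[OF assms(1)] by blast
  then show ?case using insert.IH insert.prems by auto
qed

section \<open>Translations\<close>

lemma tr_char:
  assumes uf: "ultrafilter_on X \<omega>" and pt: "partial_translation X d D t" and D: "D \<in> \<omega>"
  shows "translate_uf X \<omega> D t = {A. A \<subseteq> X \<and> {x\<in>D. t x \<in> A} \<in> \<omega>}"
proof -
  define \<eta>0 where "\<eta>0 = {A. A \<subseteq> X \<and> {x\<in>D. t x \<in> A} \<in> \<omega>}"
  have DX: "D \<subseteq> X" "t ` D \<subseteq> X" using pt unfolding partial_translation_def by auto
  have u0: "ultrafilter_on X \<eta>0"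
    unfolding ultrafilter_on_def
  proof (intro conjI allI impI)
    show "\<eta>0 \<subseteq> Pow X" unfolding \<eta>0_def by auto
    have "{x\<in>D. t x \<in> X} = D" using DX by auto
    then show "X \<in> \<eta>0" unfolding \<eta>0_def using D by auto
  next
    fix A B assume AB: "A \<subseteq> X" "B \<subseteq> X" "A \<inter> B = {}"
    have s: "{x\<in>D. t x \<in> A} \<subseteq> X" "{x\<in>D. t x \<in> B} \<subseteq> X" using DX by auto
    have i: "{x\<in>D. t x \<in> A} \<inter> {x\<in>D. t x \<in> B} = {}" using AB by auto
    have u: "{x\<in>D. t x \<in> A \<union> B} = {x\<in>D. t x \<in> A} \<union> {x\<in>D. t x \<in> B}" by auto
    have e1: "A \<union> B \<in> \<eta>0 \<longleftrightarrow> {x\<in>D. t x \<in> A \<union> B} \<in> \<omega>" unfolding \<eta>0_def using AB by blast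
    have e2: "A \<in> \<eta>0 \<longleftrightarrow> {x\<in>D. t x \<in> A} \<in> \<omega>" "B \<in> \<eta>0 \<longleftrightarrow> {x\<in>D. t x \<in> B} \<in> \<omega>"
      unfolding \<eta>0_def using AB by blast+
    show "(A \<union> B \<in> \<eta>0) = (A \<in> \<eta>0 \<or> B \<in> \<eta>0)"
      using uf_disj(1)[OF uf s i, folded u] e1 e2 by blast
    show "\<not> (A \<in> \<eta>0 \<and> B \<in> \<eta>0)"
      using uf_disj(2)[OF uf s i] AB unfolding \<eta>0_def by auto
  qed
  show ?thesis unfolding translate_uf_def \<eta>0_def[symmetric]
  proof (rule the_equality)
    show "\<eta>0 \<in> betaX X \<and> (\<forall>A. A \<subseteq> X \<longrightarrow> A \<in> \<eta>0 \<longrightarrow> {x \<in> D. t x \<in> A} \<in> \<omega>)"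
      using u0 unfolding betaX_def \<eta>0_def by auto
  next
    fix \<eta> assume h: "\<eta> \<in> betaX X \<and> (\<forall>A. A \<subseteq> X \<longrightarrow> A \<in> \<eta> \<longrightarrow> {x \<in> D. t x \<in> A} \<in> \<omega>)"
    then have u: "ultrafilter_on X \<eta>" unfolding betaX_def by auto
    have 1: "\<eta> \<subseteq> \<eta>0" using h uf_sub[OF u] unfolding \<eta>0_def by blast
    have "\<eta>0 \<subseteq> \<eta>"
    proof
      fix A assume A: "A \<in> \<eta>0"
      then have AX: "A \<subseteq> X" unfolding \<eta>0_def by auto
      show "A \<in> \<eta>"
      proof (rule ccontr)
        assume "A \<notin> \<eta>"
        then have "X - A \<in> \<eta>" using uf_compl[OF u AX] by auto
        then have "X - A \<in> \<eta>0" using 1 by auto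
        then show False using uf_compl2[OF u0 A] by auto
      qed
    qed
    then show "\<eta> = \<eta>0" using 1 by auto
  qed
qed

lemma tr_mem:
  assumes "ultrafilter_on X \<omega>" "partial_translation X d D t" "D \<in> \<omega>" "A \<subseteq> X"
  shows "A \<in> translate_uf X \<omega> D t \<longleftrightarrow> {x\<in>D. t x \<in> A} \<in> \<omega>"
  using tr_char[OF assms(1-3)] assms(4) by auto

lemma pt_props:
  assumes "partial_translation X d D t"
  shows "D \<subseteq> X" "\<And>x. x \<in> D \<Longrightarrow> t x \<in> X" "\<exists>K. \<forall>x\<in>D. d x (t x) \<le> K"
  using assms unfolding partial_translation_def by auto

lemma tr_eq_ae:
  assumes uf: "ultrafilter_on X \<omega>"
    and p1: "partial_translation X d D t" "D \<in> \<omega>"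
    and p2: "partial_translation X d D' t'" "D' \<in> \<omega>"
    and E: "{x\<in>D\<inter>D'. t x = t' x} \<in> \<omega>"
  shows "translate_uf X \<omega> D t = translate_uf X \<omega> D' t'"
proof -
  have DX: "D \<subseteq> X" "D' \<subseteq> X" using pt_props(1)[OF p1(1)] pt_props(1)[OF p2(1)] by auto
  have "A \<in> translate_uf X \<omega> D t \<longleftrightarrow> A \<in> translate_uf X \<omega> D' t'" if AX: "A \<subseteq> X" for A
  proof -
    let ?E = "{x\<in>D\<inter>D'. t x = t' x}"
    have eq: "{x\<in>D. t x \<in> A} \<inter> ?E = {x\<in>D'. t' x \<in> A} \<inter> ?E" by auto
    have "{x\<in>D. t x \<in> A} \<in> \<omega> \<longleftrightarrow> {x\<in>D'. t' x \<in> A} \<in> \<omega>"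
    proof
      assume "{x\<in>D. t x \<in> A} \<in> \<omega>"
      then have "{x\<in>D. t x \<in> A} \<inter> ?E \<in> \<omega>" using uf_int[OF uf _ E] by blast
      then show "{x\<in>D'. t' x \<in> A} \<in> \<omega>" unfolding eq using uf_mono[OF uf] DX by blast
    next
      assume "{x\<in>D'. t' x \<in> A} \<in> \<omega>"
      then have "{x\<in>D'. t' x \<in> A} \<inter> ?E \<in> \<omega>" using uf_int[OF uf _ E] by blast
      then show "{x\<in>D. t x \<in> A} \<in> \<omega>" unfolding eq[symmetric] using uf_mono[OF uf] DX by blast
    qed
    then show ?thesis using tr_mem[OF uf p1 AX] tr_mem[OF uf p2 AX] by simp
  qed
  moreover have "translate_uf X \<omega> D t \<subseteq> Pow X" "translate_uf X \<omega> D' t' \<subseteq> Pow X"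
    using tr_char[OF uf p1] tr_char[OF uf p2] by auto
  ultimately show ?thesis by blast
qed

section \<open>Greedy colouring\<close>

function gcol :: "(nat \<Rightarrow> nat \<Rightarrow> bool) \<Rightarrow> nat \<Rightarrow> nat" where
  "gcol R n = (LEAST c. c \<notin> gcol R ` {m. m < n \<and> R m n})"
  by pat_completeness auto
termination by (relation "Wellfounded.measure (\<lambda>(R,n). n)") auto

declare gcol.simps[simp del]

lemma gcol_ne: assumes "m < n" "R m n" shows "gcol R n \<noteq> gcol R m"
proof -
  let ?F = "gcol R ` {m. m < n \<and> R m n}"
  have "finite ?F" by simp
  then have "\<exists>c. c \<notin> ?F" using ex_new_if_finite[OF infinite_UNIV_nat] by blast
  then have "gcol R n \<notin> ?F" using LeastI_ex[of "\<lambda>c. c \<notin> ?F"] gcol.simps[of R n] by simp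
  then show ?thesis using assms by auto
qed

lemma gcol_le: assumes "card {m. m < n \<and> R m n} \<le> N" shows "gcol R n \<le> N"
proof -
  let ?F = "gcol R ` {m. m < n \<and> R m n}"
  have cF: "card ?F \<le> N" using card_image_le[of "{m. m < n \<and> R m n}" "gcol R"] assms by simp
  have "\<exists>c\<le>N. c \<notin> ?F"
  proof (rule ccontr)
    assume "\<not> ?thesis"
    then have "{..N} \<subseteq> ?F" by auto
    then have "card {..N} \<le> card ?F" by (intro card_mono) auto
    then show False using cF by simp
  qed
  then obtain c where "c \<le> N" "c \<notin> ?F" by blast
  then show ?thesis using Least_le[of "\<lambda>c. c \<notin> ?F" c] gcol.simps[of R n] by simp
qed

lemma greedy_coloring:
  fixes adj :: "'b \<Rightarrow> 'b \<Rightarrow> bool"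
  assumes cY: "countable Y" and sym: "\<And>y z. adj y z \<Longrightarrow> adj z y"
    and fin: "\<And>y. y \<in> Y \<Longrightarrow> finite {z\<in>Y. adj y z} \<and> card {z\<in>Y. adj y z} \<le> N"
  shows "\<exists>col. (\<forall>y\<in>Y. col y \<le> N) \<and> (\<forall>y\<in>Y. \<forall>z\<in>Y. adj y z \<longrightarrow> y \<noteq> z \<longrightarrow> col y \<noteq> col z)"
proof -
  define i where "i = to_nat_on Y"
  have inj: "inj_on i Y" unfolding i_def using inj_on_to_nat_on[OF cY] .
  define R where "R m n \<longleftrightarrow> (\<exists>y\<in>Y. \<exists>z\<in>Y. i y = m \<and> i z = n \<and> adj y z)" for m n
  define col where "col y = gcol R (i y)" for y
  have "\<forall>y\<in>Y. col y \<le> N"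
  proof
    fix z assume z: "z \<in> Y"
    have "{m. m < i z \<and> R m (i z)} \<subseteq> i ` {y\<in>Y. adj z y}"
    proof
      fix m assume "m \<in> {m. m < i z \<and> R m (i z)}"
      then obtain y z' where "y \<in> Y" "z' \<in> Y" "i y = m" "i z' = i z" "adj y z'" unfolding R_def by auto
      then have "z' = z" "adj z y" using inj z sym unfolding inj_on_def by auto
      then show "m \<in> i ` {y\<in>Y. adj z y}" using \<open>y \<in> Y\<close> \<open>i y = m\<close> by auto
    qed
    then have "card {m. m < i z \<and> R m (i z)} \<le> card (i ` {y\<in>Y. adj z y})"
      using fin[OF z] by (intro card_mono) auto
    also have "\<dots> \<le> card {y\<in>Y. adj z y}" using card_image_le fin[OF z] by blast
    also have "\<dots> \<le> N" using fin[OF z] by auto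
    finally show "col z \<le> N" unfolding col_def using gcol_le by blast
  qed
  moreover have "\<forall>y\<in>Y. \<forall>z\<in>Y. adj y z \<longrightarrow> y \<noteq> z \<longrightarrow> col y \<noteq> col z"
  proof (intro ballI impI)
    fix y z assume yz: "y \<in> Y" "z \<in> Y" "adj y z" "y \<noteq> z"
    then have ne: "i y \<noteq> i z" using inj unfolding inj_on_def by auto
    have Ryz: "R (i y) (i z)" "R (i z) (i y)" unfolding R_def using yz sym by blast+
    show "col y \<noteq> col z"
    proof (cases "i y < i z")
      case True then show ?thesis using gcol_ne[of "i y" "i z" R] Ryz(1) unfolding col_def by auto
    next
      case False then have "i z < i y" using ne by auto
      then show ?thesis using gcol_ne[of "i z" "i y" R] Ryz(2) unfolding col_def by auto
    qed
  qed
  ultimately show ?thesis by blast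
qed


lemma ms_sym: "metric_on X d \<Longrightarrow> x \<in> X \<Longrightarrow> y \<in> X \<Longrightarrow> d x y = d y x"
  unfolding metric_on_def by blast

lemma ms_tri: "metric_on X d \<Longrightarrow> x \<in> X \<Longrightarrow> y \<in> X \<Longrightarrow> z \<in> X \<Longrightarrow> d x z \<le> d x y + d y z"
  unfolding metric_on_def by blast

lemma ms_nonneg: "metric_on X d \<Longrightarrow> x \<in> X \<Longrightarrow> y \<in> X \<Longrightarrow> 0 \<le> d x y"
  unfolding metric_on_def by blast

lemma bg_ball: "bounded_geometry X d \<Longrightarrow> r > 0 \<Longrightarrow>
   \<exists>N::nat. \<forall>x\<in>X. finite {y\<in>X. d x y \<le> r} \<and> card {y\<in>X. d x y \<le> r} \<le> N"
  unfolding bounded_geometry_def by blast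

lemma bg_countable: assumes "bounded_geometry X d" shows "countable X"
proof (cases "X = {}")
  case True then show ?thesis by simp
next
  case False
  then obtain x0 where x0: "x0 \<in> X" by blast
  have fin: "finite {y\<in>X. d x0 y \<le> real n + 1}" for n :: nat
    using bg_ball[OF assms, of "real n + 1"] x0 by auto
  have "countable (\<Union>n::nat. {y\<in>X. d x0 y \<le> real n + 1})"
    by (intro countable_UN) (auto intro: countable_finite fin)
  moreover have "X \<subseteq> (\<Union>n::nat. {y\<in>X. d x0 y \<le> real n + 1})"
  proof
    fix y assume "y \<in> X"
    obtain n :: nat where "d x0 y \<le> real n" using real_arch_simple by blast
    then have "d x0 y \<le> real n + 1" by linarith
    then show "y \<in> (\<Union>n::nat. {y\<in>X. d x0 y \<le> real n + 1})" using \<open>y \<in> X\<close> by (intro UN_I[of n UNIV]) auto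
  qed
  ultimately show ?thesis using countable_subset by blast
qed

lemma tr_eq_imp_ae:
  assumes sp: "is_space X d" and uf: "ultrafilter_on X \<omega>"
    and p1: "partial_translation X d D t" "D \<in> \<omega>"
    and p2: "partial_translation X d D' t'" "D' \<in> \<omega>"
    and eq: "translate_uf X \<omega> D t = translate_uf X \<omega> D' t'"
  shows "{x\<in>D\<inter>D'. t x = t' x} \<in> \<omega>"
proof (rule ccontr)
  assume nE: "{x\<in>D\<inter>D'. t x = t' x} \<notin> \<omega>"
  have ms: "metric_on X d" and bg: "bounded_geometry X d" using sp unfolding is_space_def by auto
  have DX: "D \<subseteq> X" "D' \<subseteq> X" using pt_props(1)[OF p1(1)] pt_props(1)[OF p2(1)] by auto
  have tX: "\<And>x. x \<in> D \<Longrightarrow> t x \<in> X" "\<And>x. x \<in> D' \<Longrightarrow> t' x \<in> X"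
    using pt_props(2)[OF p1(1)] pt_props(2)[OF p2(1)] by auto
  obtain K where K: "\<forall>x\<in>D. d x (t x) \<le> K" using pt_props(3)[OF p1(1)] by blast
  obtain K' where K': "\<forall>x\<in>D'. d x (t' x) \<le> K'" using pt_props(3)[OF p2(1)] by blast
  define R where "R = max 1 (K + K')"
  have R0: "R > 0" unfolding R_def by auto
  obtain N where N: "\<forall>x\<in>X. finite {y\<in>X. d x y \<le> R} \<and> card {y\<in>X. d x y \<le> R} \<le> N"
    using bg_ball[OF bg R0] by blast
  define adj where "adj y z \<longleftrightarrow> y \<in> X \<and> z \<in> X \<and> d y z \<le> R" for y z
  have "\<exists>col. (\<forall>y\<in>X. col y \<le> N) \<and> (\<forall>y\<in>X. \<forall>z\<in>X. adj y z \<longrightarrow> y \<noteq> z \<longrightarrow> col y \<noteq> col z)"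
  proof (rule greedy_coloring[OF bg_countable[OF bg]])
    show "adj z y" if "adj y z" for y z
    proof -
      have "y \<in> X" "z \<in> X" "d y z \<le> R" using that unfolding adj_def by auto
      moreover have "d z y = d y z" using ms_sym[OF ms \<open>z \<in> X\<close> \<open>y \<in> X\<close>] .
      ultimately show ?thesis unfolding adj_def by simp
    qed
    fix y assume "y \<in> X"
    then have "{z\<in>X. adj y z} = {z\<in>X. d y z \<le> R}" unfolding adj_def by auto
    then show "finite {z\<in>X. adj y z} \<and> card {z\<in>X. adj y z} \<le> N" using N \<open>y \<in> X\<close> by simp
  qed
  then obtain col where colc: "(\<forall>y\<in>X. col y \<le> N) \<and> (\<forall>y\<in>X. \<forall>z\<in>X. adj y z \<longrightarrow> y \<noteq> z \<longrightarrow> col y \<noteq> col z)"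
    by (elim exE)
  note col = conjunct1[OF colc] conjunct2[OF colc]
  define E where "E = {x\<in>D\<inter>D'. t x \<noteq> t' x}"
  have DD: "D \<inter> D' \<in> \<omega>" using uf_int[OF uf p1(2) p2(2)] .
  have "{x\<in>D\<inter>D'. t x = t' x} \<union> E \<in> \<omega>"
  proof -
    have "{x\<in>D\<inter>D'. t x = t' x} \<union> E = D \<inter> D'" unfolding E_def by auto
    then show ?thesis using DD by simp
  qed
  moreover have "{x\<in>D\<inter>D'. t x = t' x} \<subseteq> X" "E \<subseteq> X" using DX unfolding E_def by auto
  ultimately have EW: "E \<in> \<omega>" using uf_Un2[OF uf, of "{x\<in>D\<inter>D'. t x = t' x}" E] nE by blast
  have "E = (\<Union>c\<in>{..N}. {x\<in>E. col (t x) = c})" using col(1) tX unfolding E_def by auto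
  then have "(\<Union>c\<in>{..N}. {x\<in>E. col (t x) = c}) \<in> \<omega>" using EW by simp
  moreover have "\<And>c. {x\<in>E. col (t x) = c} \<subseteq> X" using DX unfolding E_def by auto
  ultimately obtain c where c: "{x\<in>E. col (t x) = c} \<in> \<omega>"
    using uf_Un_finite[OF uf, of "{..N}" "\<lambda>c. {x\<in>E. col (t x) = c}"] by blast
  define A where "A = {z\<in>X. col z = c}"
  have AX: "A \<subseteq> X" unfolding A_def by auto
  have "{x\<in>D. t x \<in> A} \<in> \<omega>"
    by (rule uf_mono[OF uf c]) (use tX DX in \<open>auto simp: A_def E_def\<close>)
  then have "A \<in> translate_uf X \<omega> D' t'" using tr_mem[OF uf p1 AX] eq by simp
  then have "{x\<in>D'. t' x \<in> A} \<in> \<omega>" using tr_mem[OF uf p2 AX] by simp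
  then have "{x\<in>E. col (t x) = c} \<inter> {x\<in>D'. t' x \<in> A} \<in> \<omega>" using uf_int[OF uf c] by blast
  then have "{x\<in>E. col (t x) = c} \<inter> {x\<in>D'. t' x \<in> A} \<noteq> {}" using uf_empty[OF uf] by metis
  then obtain x where x: "x \<in> E" "col (t x) = c" "t' x \<in> A" by blast
  have xs: "x \<in> D" "x \<in> D'" "t x \<noteq> t' x" "x \<in> X" using x DX unfolding E_def by auto
  have "d (t x) (t' x) \<le> d (t x) x + d x (t' x)" using ms_tri[OF ms] tX xs by blast
  also have "\<dots> = d x (t x) + d x (t' x)" using ms_sym[OF ms] tX xs by auto
  also have "\<dots> \<le> K + K'" using K xs(1) K' xs(2) by (simp add: add_mono)
  also have "\<dots> \<le> R" unfolding R_def by simp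
  finally have "adj (t x) (t' x)" unfolding adj_def using tX xs by auto
  then have "col (t x) \<noteq> col (t' x)" using col(2) tX xs by blast
  then show False using x unfolding A_def by auto
qed


section \<open>Ultralimits of real functions\<close>

definition ulq :: "'a set set \<Rightarrow> 'a set \<Rightarrow> ('a \<Rightarrow> real) \<Rightarrow> real \<Rightarrow> bool" where
  "ulq \<omega> D g r \<longleftrightarrow> (\<forall>U. open U \<longrightarrow> r \<in> U \<longrightarrow> {x\<in>D. g x \<in> U} \<in> \<omega>)"

lemma ul_unique:
  assumes uf: "ultrafilter_on X \<omega>" and a: "ulq \<omega> D g r" and b: "ulq \<omega> D g r'"
  shows "r = r'"
proof (rule ccontr)
  assume "r \<noteq> r'"
  from hausdorff[OF this] obtain U V where UV: "open U" "open V" "r \<in> U" "r' \<in> V" "U \<inter> V = {}"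
    by (elim exE conjE)
  have "{x\<in>D. g x \<in> U} \<in> \<omega>" using a UV unfolding ulq_def by blast
  moreover have "{x\<in>D. g x \<in> V} \<in> \<omega>" using b UV unfolding ulq_def by blast
  ultimately have "{x\<in>D. g x \<in> U} \<inter> {x\<in>D. g x \<in> V} \<in> \<omega>" using uf_int[OF uf] by blast
  moreover have "{x\<in>D. g x \<in> U} \<inter> {x\<in>D. g x \<in> V} = {}" using UV(5) by auto
  ultimately show False using uf_empty[OF uf] by simp
qed

lemma ul_exists:
  assumes uf: "ultrafilter_on X \<omega>" and D: "D \<in> \<omega>" and B: "\<forall>x\<in>D. \<bar>g x\<bar> \<le> B"
  shows "\<exists>r. ulq \<omega> D g r"
proof -
  have DX: "D \<subseteq> X" using uf_sub[OF uf D] .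
  define S where "S = {y. {x\<in>D. y \<le> g x} \<in> \<omega>}"
  have "{x\<in>D. - B \<le> g x} = D" using B by force
  then have mB: "- B \<in> S" unfolding S_def using D by simp
  have bdd: "bdd_above S"
  proof (rule bdd_aboveI)
    fix y assume "y \<in> S"
    show "y \<le> B + 1"
    proof (rule ccontr)
      assume "\<not> y \<le> B + 1"
      then have e: "{x\<in>D. y \<le> g x} = {}" using B by force
      have "{x\<in>D. y \<le> g x} \<in> \<omega>" using \<open>y \<in> S\<close> unfolding S_def by simp
      then have "{} \<in> \<omega>" by (simp only: e)
      then show False using uf_empty[OF uf] by simp
    qed
  qed
  define r where "r = Sup S"
  have "ulq \<omega> D g r" unfolding ulq_def
  proof (intro allI impI)
    fix U :: "real set" assume U: "open U" "r \<in> U"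
    obtain e where e: "e > 0" "ball r e \<subseteq> U" using openE[OF U] by blast
    have "r - e/2 < Sup S" using e unfolding r_def by simp
    moreover have "S \<noteq> {}" using mB by auto
    ultimately have "\<exists>y\<in>S. r - e/2 < y" using less_cSup_iff[OF _ bdd] by simp
    then obtain y where y: "y \<in> S" "r - e/2 < y" by blast
    have 1: "{x\<in>D. r - e/2 \<le> g x} \<in> \<omega>"
      by (rule uf_mono[OF uf _ _ ]) (use y DX in \<open>auto simp: S_def\<close>)
    have "r + e/2 \<notin> S"
    proof
      assume "r + e/2 \<in> S"
      then have "r + e/2 \<le> Sup S" using cSup_upper[OF _ bdd] by simp
      then show False using e unfolding r_def by simp
    qed
    then have "{x\<in>D. r + e/2 \<le> g x} \<notin> \<omega>" unfolding S_def by simp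
    moreover have "{x\<in>D. r + e/2 \<le> g x} \<subseteq> X" using DX by auto
    ultimately have "X - {x\<in>D. r + e/2 \<le> g x} \<in> \<omega>" using uf_compl[OF uf] by blast
    then have "(X - {x\<in>D. r + e/2 \<le> g x}) \<inter> {x\<in>D. r - e/2 \<le> g x} \<in> \<omega>" using uf_int[OF uf _ 1] by blast
    moreover have "(X - {x\<in>D. r + e/2 \<le> g x}) \<inter> {x\<in>D. r - e/2 \<le> g x} \<subseteq> {x\<in>D. g x \<in> U}"
    proof
      fix x assume "x \<in> (X - {x\<in>D. r + e/2 \<le> g x}) \<inter> {x\<in>D. r - e/2 \<le> g x}"
      then have x: "x \<in> D" "g x < r + e/2" "r - e/2 \<le> g x" by auto
      then have "g x \<in> ball r e" using e(1) by (auto simp: dist_real_def)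
      then show "x \<in> {x\<in>D. g x \<in> U}" using e(2) x by auto
    qed
    ultimately show "{x\<in>D. g x \<in> U} \<in> \<omega>" using uf_mono[OF uf] DX by blast
  qed
  then show ?thesis by blast
qed

lemma ul_the:
  assumes uf: "ultrafilter_on X \<omega>" and D: "D \<in> \<omega>" and B: "\<forall>x\<in>D. \<bar>g x\<bar> \<le> B"
  shows "ulq \<omega> D g (ultralim_real \<omega> D g)"
proof -
  obtain r where r: "ulq \<omega> D g r" using ul_exists[OF uf D B] by blast
  have "ultralim_real \<omega> D g = r" unfolding ultralim_real_def
  proof (rule the_equality)
    show "\<forall>U. open U \<longrightarrow> r \<in> U \<longrightarrow> {x \<in> D. g x \<in> U} \<in> \<omega>" using r unfolding ulq_def .
  next
    fix r' assume "\<forall>U. open U \<longrightarrow> r' \<in> U \<longrightarrow> {x \<in> D. g x \<in> U} \<in> \<omega>"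
    then have "ulq \<omega> D g r'" unfolding ulq_def .
    then show "r' = r" using ul_unique[OF uf _ r] by blast
  qed
  then show ?thesis using r by simp
qed

lemma ul_ge:
  assumes uf: "ultrafilter_on X \<omega>" and r: "ulq \<omega> D g r" and m: "{x\<in>D. m \<le> g x} \<in> \<omega>"
  shows "m \<le> r"
proof (rule ccontr)
  assume "\<not> m \<le> r"
  then have "r \<in> {..<m}" by auto
  then have "{x\<in>D. g x \<in> {..<m}} \<in> \<omega>" using r open_lessThan unfolding ulq_def by blast
  then have "{x\<in>D. g x \<in> {..<m}} \<inter> {x\<in>D. m \<le> g x} \<in> \<omega>" using uf_int[OF uf _ m] by blast
  moreover have "{x\<in>D. g x \<in> {..<m}} \<inter> {x\<in>D. m \<le> g x} = {}" by auto
  ultimately show False using uf_empty[OF uf] by simp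
qed

lemma ul_le:
  assumes uf: "ultrafilter_on X \<omega>" and r: "ulq \<omega> D g r" and m: "{x\<in>D. g x \<le> m} \<in> \<omega>"
  shows "r \<le> m"
proof (rule ccontr)
  assume "\<not> r \<le> m"
  then have "r \<in> {m<..}" by auto
  then have "{x\<in>D. g x \<in> {m<..}} \<in> \<omega>" using r open_greaterThan unfolding ulq_def by blast
  then have "{x\<in>D. g x \<in> {m<..}} \<inter> {x\<in>D. g x \<le> m} \<in> \<omega>" using uf_int[OF uf _ m] by blast
  moreover have "{x\<in>D. g x \<in> {m<..}} \<inter> {x\<in>D. g x \<le> m} = {}" by auto
  ultimately show False using uf_empty[OF uf] by simp
qed

lemma ul_cong:
  assumes uf: "ultrafilter_on X \<omega>" and r: "ulq \<omega> D g r" and E: "E \<in> \<omega>" "E \<subseteq> D'" "D' \<subseteq> X"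
    and eq: "\<And>x. x \<in> E \<Longrightarrow> x \<in> D \<and> g x = g' x"
  shows "ulq \<omega> D' g' r"
  unfolding ulq_def
proof (intro allI impI)
  fix U assume "open U" "r \<in> U"
  then have "{x\<in>D. g x \<in> U} \<in> \<omega>" using r unfolding ulq_def by blast
  then have "{x\<in>D. g x \<in> U} \<inter> E \<in> \<omega>" using uf_int[OF uf _ E(1)] by blast
  moreover have "{x\<in>D. g x \<in> U} \<inter> E \<subseteq> {x\<in>D'. g' x \<in> U}" using eq E(2) by auto
  moreover have "{x\<in>D'. g' x \<in> U} \<subseteq> X" using E(3) by auto
  ultimately show "{x\<in>D'. g' x \<in> U} \<in> \<omega>" using uf_mono[OF uf] by blast
qed

lemma pair_bounded:
  assumes ms: "metric_on X d" and p1: "partial_translation X d Da ta" and p2: "partial_translation X d Db tb"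
  shows "\<exists>B. \<forall>x\<in>Da\<inter>Db. \<bar>d (ta x) (tb x)\<bar> \<le> B"
proof -
  obtain Ka where Ka: "\<forall>x\<in>Da. d x (ta x) \<le> Ka" using pt_props(3)[OF p1] by blast
  obtain Kb where Kb: "\<forall>x\<in>Db. d x (tb x) \<le> Kb" using pt_props(3)[OF p2] by blast
  have "\<bar>d (ta x) (tb x)\<bar> \<le> Ka + Kb" if x: "x \<in> Da \<inter> Db" for x
  proof -
    have xX: "x \<in> X" "ta x \<in> X" "tb x \<in> X"
      using x pt_props(1,2)[OF p1] pt_props(1,2)[OF p2] by auto
    have "0 \<le> d (ta x) (tb x)" using ms_nonneg[OF ms xX(2,3)] .
    moreover have "d (ta x) (tb x) \<le> d (ta x) x + d x (tb x)" using ms_tri[OF ms xX(2,1,3)] .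
    moreover have "d (ta x) x = d x (ta x)" using ms_sym[OF ms xX(2,1)] .
    moreover have "d x (ta x) \<le> Ka" "d x (tb x) \<le> Kb" using Ka Kb x by auto
    ultimately show ?thesis by linarith
  qed
  then show ?thesis by blast
qed

lemma dw_eq:
  assumes sp: "is_space X d" and uf: "ultrafilter_on X \<omega>"
    and p1: "partial_translation X d Da ta" "Da \<in> \<omega>"
    and p2: "partial_translation X d Db tb" "Db \<in> \<omega>"
  shows "d_omega X d \<omega> (translate_uf X \<omega> Da ta) (translate_uf X \<omega> Db tb)
       = ultralim_real \<omega> (Da \<inter> Db) (\<lambda>x. d (ta x) (tb x))"
proof -
  have ms: "metric_on X d" using sp unfolding is_space_def by auto
  have Dab: "Da \<inter> Db \<in> \<omega>" using uf_int[OF uf p1(2) p2(2)] .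
  obtain B where B: "\<forall>x\<in>Da\<inter>Db. \<bar>d (ta x) (tb x)\<bar> \<le> B" using pair_bounded[OF ms p1(1) p2(1)] by blast
  have l: "ulq \<omega> (Da \<inter> Db) (\<lambda>x. d (ta x) (tb x)) (ultralim_real \<omega> (Da \<inter> Db) (\<lambda>x. d (ta x) (tb x)))"
    using ul_the[OF uf Dab B] .
  show ?thesis unfolding d_omega_def
  proof (rule the_equality)
    show "\<exists>Da' ta' Db' tb'.
       partial_translation X d Da' ta' \<and> Da' \<in> \<omega> \<and> translate_uf X \<omega> Da' ta' = translate_uf X \<omega> Da ta \<and>
       partial_translation X d Db' tb' \<and> Db' \<in> \<omega> \<and> translate_uf X \<omega> Db' tb' = translate_uf X \<omega> Db tb \<and>
       ultralim_real \<omega> (Da' \<inter> Db') (\<lambda>x. d (ta' x) (tb' x)) = ultralim_real \<omega> (Da \<inter> Db) (\<lambda>x. d (ta x) (tb x))"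
      apply (rule exI[of _ Da], rule exI[of _ ta], rule exI[of _ Db], rule exI[of _ tb])
      using p1 p2 by simp
  next
    fix r assume "\<exists>Da' ta' Db' tb'.
       partial_translation X d Da' ta' \<and> Da' \<in> \<omega> \<and> translate_uf X \<omega> Da' ta' = translate_uf X \<omega> Da ta \<and>
       partial_translation X d Db' tb' \<and> Db' \<in> \<omega> \<and> translate_uf X \<omega> Db' tb' = translate_uf X \<omega> Db tb \<and>
       ultralim_real \<omega> (Da' \<inter> Db') (\<lambda>x. d (ta' x) (tb' x)) = r"
    then obtain Da' ta' Db' tb' where q:
      "partial_translation X d Da' ta'" "Da' \<in> \<omega>" "translate_uf X \<omega> Da' ta' = translate_uf X \<omega> Da ta"
      "partial_translation X d Db' tb'" "Db' \<in> \<omega>" "translate_uf X \<omega> Db' tb' = translate_uf X \<omega> Db tb"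
      "ultralim_real \<omega> (Da' \<inter> Db') (\<lambda>x. d (ta' x) (tb' x)) = r"
      by (elim exE conjE) 
    have Dab': "Da' \<inter> Db' \<in> \<omega>" using uf_int[OF uf q(2) q(5)] .
    obtain B' where B': "\<forall>x\<in>Da'\<inter>Db'. \<bar>d (ta' x) (tb' x)\<bar> \<le> B'" using pair_bounded[OF ms q(1) q(4)] by blast
    have l': "ulq \<omega> (Da' \<inter> Db') (\<lambda>x. d (ta' x) (tb' x)) r"
      using ul_the[OF uf Dab' B'] q(7) by simp
    have Ea: "{x\<in>Da'\<inter>Da. ta' x = ta x} \<in> \<omega>" using tr_eq_imp_ae[OF sp uf q(1,2) p1 q(3)] .
    have Eb: "{x\<in>Db'\<inter>Db. tb' x = tb x} \<in> \<omega>" using tr_eq_imp_ae[OF sp uf q(4,5) p2 q(6)] .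
    have E: "{x\<in>Da'\<inter>Da. ta' x = ta x} \<inter> {x\<in>Db'\<inter>Db. tb' x = tb x} \<in> \<omega>" using uf_int[OF uf Ea Eb] .
    have DX: "Da' \<inter> Db' \<subseteq> X" using pt_props(1)[OF q(1)] by auto
    have "ulq \<omega> (Da' \<inter> Db') (\<lambda>x. d (ta' x) (tb' x)) (ultralim_real \<omega> (Da \<inter> Db) (\<lambda>x. d (ta x) (tb x)))"
      by (rule ul_cong[OF uf l E _ DX]) auto
    then show "r = ultralim_real \<omega> (Da \<inter> Db) (\<lambda>x. d (ta x) (tb x))" using ul_unique[OF uf l'] by blast
  qed
qed


section \<open>Finiteness of the translates with bounded displacement\<close>

definition SK :: "'a set \<Rightarrow> ('a \<Rightarrow> 'a \<Rightarrow> real) \<Rightarrow> 'a set set \<Rightarrow> nat \<Rightarrow> 'a set set set" where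
  "SK X d \<omega> K = {translate_uf X \<omega> D t | D t. partial_translation X d D t \<and> D \<in> \<omega> \<and> (\<forall>x\<in>D. d x (t x) \<le> real K)}"

lemma SK_card:
  assumes sp: "is_space X d" and uf: "ultrafilter_on X \<omega>"
    and N: "\<forall>x\<in>X. finite {y\<in>X. d x y \<le> real K + 1} \<and> card {y\<in>X. d x y \<le> real K + 1} \<le> N"
    and F: "finite F" "F \<subseteq> SK X d \<omega> K"
  shows "card F \<le> N"
proof (cases "F = {}")
  case True then show ?thesis by simp
next
  case False
  have "\<forall>\<eta>\<in>F. \<exists>p. partial_translation X d (fst p) (snd p) \<and> fst p \<in> \<omega> \<and> (\<forall>x\<in>fst p. d x (snd p x) \<le> real K)
      \<and> translate_uf X \<omega> (fst p) (snd p) = \<eta>"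
  proof
    fix \<eta> assume "\<eta> \<in> F"
    then have "\<eta> \<in> SK X d \<omega> K" using F by auto
    then obtain D t where "partial_translation X d D t" "D \<in> \<omega>" "\<forall>x\<in>D. d x (t x) \<le> real K"
      "\<eta> = translate_uf X \<omega> D t" unfolding SK_def by blast
    then show "\<exists>p. partial_translation X d (fst p) (snd p) \<and> fst p \<in> \<omega> \<and> (\<forall>x\<in>fst p. d x (snd p x) \<le> real K)
      \<and> translate_uf X \<omega> (fst p) (snd p) = \<eta>" by (intro exI[of _ "(D, t)"]) simp
  qed
  then have "\<exists>rp. \<forall>\<eta>\<in>F. partial_translation X d (fst (rp \<eta>)) (snd (rp \<eta>)) \<and> fst (rp \<eta>) \<in> \<omega>
      \<and> (\<forall>x\<in>fst (rp \<eta>). d x (snd (rp \<eta>) x) \<le> real K) \<and> translate_uf X \<omega> (fst (rp \<eta>)) (snd (rp \<eta>)) = \<eta>"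
    by (rule bchoice)
  then obtain rp where rp: "\<forall>\<eta>\<in>F. partial_translation X d (fst (rp \<eta>)) (snd (rp \<eta>)) \<and> fst (rp \<eta>) \<in> \<omega>
      \<and> (\<forall>x\<in>fst (rp \<eta>). d x (snd (rp \<eta>) x) \<le> real K) \<and> translate_uf X \<omega> (fst (rp \<eta>)) (snd (rp \<eta>)) = \<eta>"
    .. 
  define Dr where "Dr \<eta> = fst (rp \<eta>)" for \<eta>
  define tr where "tr \<eta> = snd (rp \<eta>)" for \<eta>
  have pt: "partial_translation X d (Dr \<eta>) (tr \<eta>)" "Dr \<eta> \<in> \<omega>" "\<forall>x\<in>Dr \<eta>. d x (tr \<eta> x) \<le> real K"
    "translate_uf X \<omega> (Dr \<eta>) (tr \<eta>) = \<eta>" if "\<eta> \<in> F" for \<eta>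
    using rp that unfolding Dr_def tr_def by auto
  define Aa where "Aa p = (if fst p = snd p then Dr (fst p) else X - {x\<in>Dr (fst p) \<inter> Dr (snd p). tr (fst p) x = tr (snd p) x})" for p
  have Aw: "Aa p \<in> \<omega>" if p: "p \<in> F \<times> F" for p
  proof (cases "fst p = snd p")
    case True then show ?thesis using pt(2) p unfolding Aa_def by auto
  next
    case ne: False
    have nin: "{x\<in>Dr (fst p) \<inter> Dr (snd p). tr (fst p) x = tr (snd p) x} \<notin> \<omega>"
    proof
      assume "{x\<in>Dr (fst p) \<inter> Dr (snd p). tr (fst p) x = tr (snd p) x} \<in> \<omega>"
      then have "translate_uf X \<omega> (Dr (fst p)) (tr (fst p)) = translate_uf X \<omega> (Dr (snd p)) (tr (snd p))"
        using tr_eq_ae[OF uf pt(1,2)[of "fst p"] pt(1,2)[of "snd p"]] p by auto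
      then show False using pt(4)[of "fst p"] pt(4)[of "snd p"] p ne by auto
    qed
    have sub: "{x\<in>Dr (fst p) \<inter> Dr (snd p). tr (fst p) x = tr (snd p) x} \<subseteq> X"
      using pt_props(1)[OF pt(1)[of "fst p"]] p by auto
    have "X - {x\<in>Dr (fst p) \<inter> Dr (snd p). tr (fst p) x = tr (snd p) x} \<in> \<omega>"
      using uf_compl[OF uf sub] nin by simp
    then show ?thesis using ne unfolding Aa_def by simp
  qed
  have "finite (F \<times> F)" using F(1) by simp
  then have "X \<inter> (\<Inter>p\<in>F \<times> F. Aa p) \<in> \<omega>" by (rule uf_Int_finite[OF uf _ Aw])
  then have "X \<inter> (\<Inter>p\<in>F \<times> F. Aa p) \<noteq> {}" using uf_empty[OF uf] by auto
  then obtain x where x0: "x \<in> X \<inter> (\<Inter>p\<in>F \<times> F. Aa p)" by blast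
  have x: "x \<in> X" "\<And>p. p \<in> F \<times> F \<Longrightarrow> x \<in> Aa p" using x0 by auto
  have xD: "x \<in> Dr \<eta>" if "\<eta> \<in> F" for \<eta> using x(2)[of "(\<eta>, \<eta>)"] that unfolding Aa_def by auto
  have inj: "inj_on (\<lambda>\<eta>. tr \<eta> x) F"
  proof (rule inj_onI)
    fix \<eta> \<eta>' assume h: "\<eta> \<in> F" "\<eta>' \<in> F" "tr \<eta> x = tr \<eta>' x"
    show "\<eta> = \<eta>'"
    proof (rule ccontr)
      assume "\<eta> \<noteq> \<eta>'"
      then have "x \<in> X - {x\<in>Dr \<eta> \<inter> Dr \<eta>'. tr \<eta> x = tr \<eta>' x}" using x(2)[of "(\<eta>, \<eta>')"] h unfolding Aa_def by auto
      then show False using xD h by auto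
    qed
  qed
  have "(\<lambda>\<eta>. tr \<eta> x) ` F \<subseteq> {y\<in>X. d x y \<le> real K + 1}"
  proof
    fix y assume "y \<in> (\<lambda>\<eta>. tr \<eta> x) ` F"
    then obtain \<eta> where "\<eta> \<in> F" "y = tr \<eta> x" by blast
    then have "d x y \<le> real K" "y \<in> X" using pt(3)[of \<eta>] pt_props(2)[OF pt(1)[of \<eta>]] xD[of \<eta>] by auto
    then show "y \<in> {y\<in>X. d x y \<le> real K + 1}" by simp
  qed
  then have "card ((\<lambda>\<eta>. tr \<eta> x) ` F) \<le> card {y\<in>X. d x y \<le> real K + 1}"
    using N x(1) by (intro card_mono) auto
  then show ?thesis using card_image[OF inj] N x(1) by auto
qed

lemma SK_finite:
  assumes sp: "is_space X d" and uf: "ultrafilter_on X \<omega>"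
  shows "finite (SK X d \<omega> K)"
proof (rule ccontr)
  assume inf: "infinite (SK X d \<omega> K)"
  have bg: "bounded_geometry X d" using sp unfolding is_space_def by auto
  obtain N where N: "\<forall>x\<in>X. finite {y\<in>X. d x y \<le> real K + 1} \<and> card {y\<in>X. d x y \<le> real K + 1} \<le> N"
    using bg_ball[OF bg, of "real K + 1"] by auto
  obtain F where "F \<subseteq> SK X d \<omega> K" "finite F" "card F = Suc N"
    using infinite_arbitrarily_large[OF inf] by blast
  then show False using SK_card[OF sp uf N] by fastforce
qed

lemma SK_mono: "K \<le> K' \<Longrightarrow> SK X d \<omega> K \<subseteq> SK X d \<omega> K'"
  unfolding SK_def by (force intro: order_trans)

lemma SK_sub: "SK X d \<omega> K \<subseteq> X_omega X d \<omega>"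
  unfolding SK_def X_omega_def by blast

lemma SK_Union: "(\<Union>K. SK X d \<omega> K) = X_omega X d \<omega>"
proof
  show "(\<Union>K. SK X d \<omega> K) \<subseteq> X_omega X d \<omega>" using SK_sub by blast
  show "X_omega X d \<omega> \<subseteq> (\<Union>K. SK X d \<omega> K)"
  proof
    fix \<eta> assume "\<eta> \<in> X_omega X d \<omega>"
    then obtain D t where h: "partial_translation X d D t" "D \<in> \<omega>" "\<eta> = translate_uf X \<omega> D t"
      unfolding X_omega_def by blast
    obtain K0 where K0: "\<forall>x\<in>D. d x (t x) \<le> K0" using pt_props(3)[OF h(1)] by blast
    obtain K :: nat where "K0 \<le> real K" using real_arch_simple by blast
    then have "\<forall>x\<in>D. d x (t x) \<le> real K" using K0 by force
    then have "\<eta> \<in> SK X d \<omega> K" unfolding SK_def using h by blast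
    then show "\<eta> \<in> (\<Union>K. SK X d \<omega> K)" by blast
  qed
qed


theorem lemma7p10:
  fixes X :: "'a set" and d :: "'a \<Rightarrow> 'a \<Rightarrow> real" and c :: real and f :: "nat \<Rightarrow> nat"
    and \<omega> :: "'a set set"
  assumes "is_space X d"
    and "0 < c" and "c \<le> 1"
    and "msp_with X d c f"
    and "\<omega> \<in> boundaryX X"
  shows "msp_with (X_omega X d \<omega>) (d_omega X d \<omega>) c f"
proof -
  note sp = assms(1)
  have uf: "ultrafilter_on X \<omega>" using assms(5) unfolding boundaryX_def betaX_def by auto
  have ms: "metric_on X d" using sp unfolding is_space_def by auto
  have fmono: "mono f" using assms(4) unfolding msp_with_def by auto
  have MX: "\<forall>(m::nat) (\<mu>::'a measure). space \<mu> = X \<longrightarrow> sets \<mu> = Pow X \<longrightarrow> emeasure \<mu> X < \<infinity> \<longrightarrow>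
        (\<exists>P. P \<subseteq> Pow X \<and> disjoint P \<and>
             (\<forall>A\<in>P. \<forall>B\<in>P. A \<noteq> B \<longrightarrow> (\<forall>x\<in>A. \<forall>y\<in>B. real m \<le> d x y)) \<and>
             (\<forall>A\<in>P. \<forall>x\<in>A. \<forall>y\<in>A. d x y \<le> real (f m)) \<and>
             ennreal c * emeasure \<mu> X \<le> emeasure \<mu> (\<Union>P))"
    using assms(4) unfolding msp_with_def by (elim conjE)
  define S where "S = X_omega X d \<omega>"
  have "\<forall>\<alpha>\<in>S. \<exists>p. partial_translation X d (fst p) (snd p) \<and> fst p \<in> \<omega> \<and> translate_uf X \<omega> (fst p) (snd p) = \<alpha>"
  proof
    fix \<alpha> assume "\<alpha> \<in> S"
    then obtain D t where h: "partial_translation X d D t" "D \<in> \<omega>" "\<alpha> = translate_uf X \<omega> D t"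
      unfolding S_def X_omega_def by blast
    show "\<exists>p. partial_translation X d (fst p) (snd p) \<and> fst p \<in> \<omega> \<and> translate_uf X \<omega> (fst p) (snd p) = \<alpha>"
      using h by (intro exI[of _ "(D, t)"]) simp
  qed
  then have "\<exists>rp. \<forall>\<alpha>\<in>S. partial_translation X d (fst (rp \<alpha>)) (snd (rp \<alpha>)) \<and> fst (rp \<alpha>) \<in> \<omega> \<and> translate_uf X \<omega> (fst (rp \<alpha>)) (snd (rp \<alpha>)) = \<alpha>"
    by (rule bchoice)
  then obtain rp where rp: "\<forall>\<alpha>\<in>S. partial_translation X d (fst (rp \<alpha>)) (snd (rp \<alpha>)) \<and> fst (rp \<alpha>) \<in> \<omega> \<and> translate_uf X \<omega> (fst (rp \<alpha>)) (snd (rp \<alpha>)) = \<alpha>"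
    ..
  define Dr where "Dr \<alpha> = fst (rp \<alpha>)" for \<alpha>
  define tr where "tr \<alpha> = snd (rp \<alpha>)" for \<alpha>
  have rep: "partial_translation X d (Dr \<alpha>) (tr \<alpha>)" "Dr \<alpha> \<in> \<omega>" "translate_uf X \<omega> (Dr \<alpha>) (tr \<alpha>) = \<alpha>"
    if "\<alpha> \<in> S" for \<alpha> using bspec[OF rp that] unfolding Dr_def tr_def by auto
  have DrX: "Dr \<alpha> \<subseteq> X" if "\<alpha> \<in> S" for \<alpha> using pt_props(1)[OF rep(1)[OF that]] .
  have trX: "tr \<alpha> x \<in> X" if "\<alpha> \<in> S" "x \<in> Dr \<alpha>" for \<alpha> x using pt_props(2)[OF rep(1)[OF that(1)] that(2)] .
  have dwq: "ulq \<omega> (Dr \<alpha> \<inter> Dr \<beta>) (\<lambda>x. d (tr \<alpha> x) (tr \<beta> x)) (d_omega X d \<omega> \<alpha> \<beta>)"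
    if ab: "\<alpha> \<in> S" "\<beta> \<in> S" for \<alpha> \<beta>
  proof -
    have e: "d_omega X d \<omega> \<alpha> \<beta> = ultralim_real \<omega> (Dr \<alpha> \<inter> Dr \<beta>) (\<lambda>x. d (tr \<alpha> x) (tr \<beta> x))"
      using dw_eq[OF sp uf rep(1,2)[OF ab(1)] rep(1,2)[OF ab(2)]] rep(3)[OF ab(1)] rep(3)[OF ab(2)] by simp
    obtain B where B: "\<forall>x\<in>Dr \<alpha> \<inter> Dr \<beta>. \<bar>d (tr \<alpha> x) (tr \<beta> x)\<bar> \<le> B"
      using pair_bounded[OF ms rep(1)[OF ab(1)] rep(1)[OF ab(2)]] by blast
    have "Dr \<alpha> \<inter> Dr \<beta> \<in> \<omega>" using uf_int[OF uf rep(2)[OF ab(1)] rep(2)[OF ab(2)]] .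
    from ul_the[OF uf this B] show ?thesis unfolding e .
  qed
  show ?thesis unfolding msp_with_def S_def[symmetric]
  proof (intro conjI allI impI)
    show "mono f" by (rule fmono)
    fix m :: nat and \<mu> :: "'a set set measure"
    assume s\<mu>: "space \<mu> = S" "sets \<mu> = Pow S" "emeasure \<mu> S < \<infinity>"
    define A where "A x = {\<alpha>\<in>S. x \<in> Dr \<alpha>}" for x
    have AS: "A x \<subseteq> S" for x unfolding A_def by auto
    define \<nu> where "\<nu> x = distr (restrict_space \<mu> (A x)) (count_space X) (\<lambda>\<alpha>. tr \<alpha> x)" for x
    have spR: "space (restrict_space \<mu> (A x)) = A x" for x
      using AS[of x] by (simp add: space_restrict_space s\<mu>(1) Int_absorb2)
    have setsR: "sets (restrict_space \<mu> (A x)) = Pow (A x)" for x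
    proof -
      have "(\<inter>) (A x) ` Pow S = Pow (A x)"
      proof
        show "(\<inter>) (A x) ` Pow S \<subseteq> Pow (A x)" by auto
        show "Pow (A x) \<subseteq> (\<inter>) (A x) ` Pow S"
        proof
          fix C assume "C \<in> Pow (A x)"
          then have "C = A x \<inter> C" "C \<in> Pow S" using AS[of x] by auto
          then show "C \<in> (\<inter>) (A x) ` Pow S" by blast
        qed
      qed
      then show ?thesis by (simp add: sets_restrict_space s\<mu>(2))
    qed
    have meas: "(\<lambda>\<alpha>. tr \<alpha> x) \<in> measurable (restrict_space \<mu> (A x)) (count_space X)" for x
    proof (rule measurableI)
      fix \<alpha> assume "\<alpha> \<in> space (restrict_space \<mu> (A x))"
      then have "\<alpha> \<in> A x" using spR[of x] by simp
      then have "\<alpha> \<in> S" "x \<in> Dr \<alpha>" unfolding A_def by auto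
      then show "tr \<alpha> x \<in> space (count_space X)" using trX by simp
    next
      fix B assume "B \<in> sets (count_space X)"
      show "(\<lambda>\<alpha>. tr \<alpha> x) -` B \<inter> space (restrict_space \<mu> (A x)) \<in> sets (restrict_space \<mu> (A x))"
        unfolding setsR spR by auto
    qed
    have \<nu>sp: "space (\<nu> x) = X" "sets (\<nu> x) = Pow X" for x unfolding \<nu>_def by simp_all
    have \<nu>em: "emeasure (\<nu> x) B = emeasure \<mu> {\<alpha>\<in>A x. tr \<alpha> x \<in> B}" if "B \<subseteq> X" for x B
    proof -
      have "emeasure (\<nu> x) B = emeasure (restrict_space \<mu> (A x)) ((\<lambda>\<alpha>. tr \<alpha> x) -` B \<inter> A x)"
        unfolding \<nu>_def using emeasure_distr[OF meas[of x], of B] that spR[of x] by simp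
      also have "(\<lambda>\<alpha>. tr \<alpha> x) -` B \<inter> A x = {\<alpha>\<in>A x. tr \<alpha> x \<in> B}" by auto
      also have "emeasure (restrict_space \<mu> (A x)) {\<alpha>\<in>A x. tr \<alpha> x \<in> B} = emeasure \<mu> {\<alpha>\<in>A x. tr \<alpha> x \<in> B}"
        by (rule emeasure_restrict_space) (use AS[of x] s\<mu> in auto)
      finally show ?thesis .
    qed
    have \<nu>fin: "emeasure (\<nu> x) X < \<infinity>" for x
    proof -
      have "emeasure (\<nu> x) X = emeasure \<mu> {\<alpha>\<in>A x. tr \<alpha> x \<in> X}" using \<nu>em by simp
      also have "\<dots> \<le> emeasure \<mu> S" by (rule emeasure_mono) (use AS[of x] s\<mu> in auto)
      finally show ?thesis using s\<mu>(3) by (simp add: le_less_trans)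
    qed
    have "\<forall>x\<in>X. \<exists>P. P \<subseteq> Pow X \<and> disjoint P \<and>
             (\<forall>A\<in>P. \<forall>B\<in>P. A \<noteq> B \<longrightarrow> (\<forall>x\<in>A. \<forall>y\<in>B. real m \<le> d x y)) \<and>
             (\<forall>A\<in>P. \<forall>x\<in>A. \<forall>y\<in>A. d x y \<le> real (f m)) \<and>
             ennreal c * emeasure (\<nu> x) X \<le> emeasure (\<nu> x) (\<Union>P)"
    proof
      fix x assume "x \<in> X"
      show "\<exists>P. P \<subseteq> Pow X \<and> disjoint P \<and>
             (\<forall>A\<in>P. \<forall>B\<in>P. A \<noteq> B \<longrightarrow> (\<forall>x\<in>A. \<forall>y\<in>B. real m \<le> d x y)) \<and>
             (\<forall>A\<in>P. \<forall>x\<in>A. \<forall>y\<in>A. d x y \<le> real (f m)) \<and>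
             ennreal c * emeasure (\<nu> x) X \<le> emeasure (\<nu> x) (\<Union>P)"
        using MX[rule_format, OF \<nu>sp(1) \<nu>sp(2) \<nu>fin] .
    qed
    then have "\<exists>PP. \<forall>x\<in>X. PP x \<subseteq> Pow X \<and> disjoint (PP x) \<and>
             (\<forall>A\<in>PP x. \<forall>B\<in>PP x. A \<noteq> B \<longrightarrow> (\<forall>x\<in>A. \<forall>y\<in>B. real m \<le> d x y)) \<and>
             (\<forall>A\<in>PP x. \<forall>x\<in>A. \<forall>y\<in>A. d x y \<le> real (f m)) \<and>
             ennreal c * emeasure (\<nu> x) X \<le> emeasure (\<nu> x) (\<Union>(PP x))"
      by (rule bchoice)
    then obtain PP where PPall: "\<forall>x\<in>X. PP x \<subseteq> Pow X \<and> disjoint (PP x) \<and>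
             (\<forall>A\<in>PP x. \<forall>B\<in>PP x. A \<noteq> B \<longrightarrow> (\<forall>x\<in>A. \<forall>y\<in>B. real m \<le> d x y)) \<and>
             (\<forall>A\<in>PP x. \<forall>x\<in>A. \<forall>y\<in>A. d x y \<le> real (f m)) \<and>
             ennreal c * emeasure (\<nu> x) X \<le> emeasure (\<nu> x) (\<Union>(PP x))"
      ..
    have PPx: "PP x \<subseteq> Pow X \<and> disjoint (PP x) \<and>
             (\<forall>A\<in>PP x. \<forall>B\<in>PP x. A \<noteq> B \<longrightarrow> (\<forall>x\<in>A. \<forall>y\<in>B. real m \<le> d x y)) \<and>
             (\<forall>A\<in>PP x. \<forall>x\<in>A. \<forall>y\<in>A. d x y \<le> real (f m)) \<and>
             ennreal c * emeasure (\<nu> x) X \<le> emeasure (\<nu> x) (\<Union>(PP x))" if "x \<in> X" for x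
      using bspec[OF PPall that] .
    note PP1 = conjunct1[OF PPx]
    note PP2 = conjunct1[OF conjunct2[OF PPx]]
    note PP3 = conjunct1[OF conjunct2[OF conjunct2[OF PPx]]]
    note PP4 = conjunct1[OF conjunct2[OF conjunct2[OF conjunct2[OF PPx]]]]
    note PP5 = conjunct2[OF conjunct2[OF conjunct2[OF conjunct2[OF PPx]]]]
    have pieq: "B1 = B2" if "x \<in> X" "B1 \<in> PP x" "B2 \<in> PP x" "y \<in> B1" "y \<in> B2" for x B1 B2 y
    proof (rule ccontr)
      assume "B1 \<noteq> B2"
      then have "B1 \<inter> B2 = {}" using disjointD[OF PP2[OF that(1)] that(2,3)] by simp
      then show False using that(4,5) by auto
    qed
    define same where "same x \<alpha> \<beta> \<longleftrightarrow> x \<in> Dr \<alpha> \<and> x \<in> Dr \<beta> \<and> (\<exists>B\<in>PP x. tr \<alpha> x \<in> B \<and> tr \<beta> x \<in> B)"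
      for x \<alpha> \<beta>
    define rel where "rel \<alpha> \<beta> \<longleftrightarrow> {x\<in>X. same x \<alpha> \<beta>} \<in> \<omega>" for \<alpha> \<beta>
    have rel_sym: "rel \<beta> \<alpha>" if "rel \<alpha> \<beta>" for \<alpha> \<beta>
    proof -
      have "{x\<in>X. same x \<alpha> \<beta>} = {x\<in>X. same x \<beta> \<alpha>}" unfolding same_def by auto
      then show ?thesis using that unfolding rel_def by simp
    qed
    have rel_refl: "rel \<alpha> \<alpha>" if "rel \<alpha> \<beta>" for \<alpha> \<beta>
    proof -
      have "{x\<in>X. same x \<alpha> \<beta>} \<subseteq> {x\<in>X. same x \<alpha> \<alpha>}" unfolding same_def by auto
      then show ?thesis using that uf_mono[OF uf] unfolding rel_def by blast
    qed
    have rel_trans: "rel \<alpha> \<gamma>" if "rel \<alpha> \<beta>" "rel \<beta> \<gamma>" for \<alpha> \<beta> \<gamma>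
    proof -
      have "{x\<in>X. same x \<alpha> \<beta>} \<inter> {x\<in>X. same x \<beta> \<gamma>} \<in> \<omega>" using uf_int[OF uf] that unfolding rel_def by blast
      moreover have "{x\<in>X. same x \<alpha> \<beta>} \<inter> {x\<in>X. same x \<beta> \<gamma>} \<subseteq> {x\<in>X. same x \<alpha> \<gamma>}"
      proof
        fix x assume "x \<in> {x\<in>X. same x \<alpha> \<beta>} \<inter> {x\<in>X. same x \<beta> \<gamma>}"
        then obtain B1 B2 where h: "x \<in> X" "x \<in> Dr \<alpha>" "x \<in> Dr \<gamma>" "B1 \<in> PP x" "B2 \<in> PP x"
          "tr \<alpha> x \<in> B1" "tr \<beta> x \<in> B1" "tr \<beta> x \<in> B2" "tr \<gamma> x \<in> B2" unfolding same_def by auto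
        then have "B1 = B2" using pieq by blast
        then show "x \<in> {x\<in>X. same x \<alpha> \<gamma>}" using h unfolding same_def by auto
      qed
      ultimately show ?thesis using uf_mono[OF uf] unfolding rel_def by blast
    qed
    define \<Omega> where "\<Omega> = {\<alpha>\<in>S. rel \<alpha> \<alpha>}"
    define cls where "cls \<alpha> = {\<beta>\<in>S. rel \<alpha> \<beta>}" for \<alpha>
    define P where "P = cls ` \<Omega>"
    have UP: "\<Union>P = \<Omega>"
    proof
      show "\<Union>P \<subseteq> \<Omega>" unfolding P_def cls_def \<Omega>_def using rel_sym rel_refl by blast
      show "\<Omega> \<subseteq> \<Union>P" unfolding P_def cls_def \<Omega>_def by blast
    qed
    have cls_eq: "cls \<alpha> = cls \<alpha>'" if "rel \<alpha> \<alpha>'" for \<alpha> \<alpha>'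
      unfolding cls_def using rel_trans rel_sym that by blast
    show "\<exists>P. P \<subseteq> Pow S \<and> disjoint P \<and>
             (\<forall>A\<in>P. \<forall>B\<in>P. A \<noteq> B \<longrightarrow> (\<forall>x\<in>A. \<forall>y\<in>B. real m \<le> d_omega X d \<omega> x y)) \<and>
             (\<forall>A\<in>P. \<forall>x\<in>A. \<forall>y\<in>A. d_omega X d \<omega> x y \<le> real (f m)) \<and>
             ennreal c * emeasure \<mu> S \<le> emeasure \<mu> (\<Union>P)"
    proof (rule exI[of _ P], intro conjI)
      show "P \<subseteq> Pow S" unfolding P_def cls_def by auto
      show "disjoint P"
      proof (rule disjointI)
        fix a b assume ab: "a \<in> P" "b \<in> P" "a \<noteq> b"
        show "a \<inter> b = {}"
        proof (rule ccontr)
          assume "a \<inter> b \<noteq> {}"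
          then obtain \<gamma> where "\<gamma> \<in> a" "\<gamma> \<in> b" by blast
          moreover obtain \<alpha> \<alpha>' where "a = cls \<alpha>" "b = cls \<alpha>'" using ab unfolding P_def by blast
          ultimately have "rel \<alpha> \<gamma>" "rel \<alpha>' \<gamma>" unfolding cls_def by auto
          then have "rel \<alpha> \<alpha>'" using rel_trans rel_sym by blast
          then show False using cls_eq ab \<open>a = cls \<alpha>\<close> \<open>b = cls \<alpha>'\<close> by blast
        qed
      qed
      show "\<forall>A\<in>P. \<forall>B\<in>P. A \<noteq> B \<longrightarrow> (\<forall>x\<in>A. \<forall>y\<in>B. real m \<le> d_omega X d \<omega> x y)"
      proof (intro ballI impI)
        fix a b \<beta> \<gamma> assume ab: "a \<in> P" "b \<in> P" "a \<noteq> b" "\<beta> \<in> a" "\<gamma> \<in> b"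
        obtain \<alpha> \<alpha>' where aa: "a = cls \<alpha>" "b = cls \<alpha>'" using ab unfolding P_def by blast
        have r: "rel \<alpha> \<beta>" "rel \<alpha>' \<gamma>" "\<beta> \<in> S" "\<gamma> \<in> S" using ab aa unfolding cls_def by auto
        have nr: "\<not> rel \<beta> \<gamma>"
        proof
          assume "rel \<beta> \<gamma>"
          then have "rel \<alpha> \<alpha>'" using r rel_trans rel_sym by blast
          then show False using cls_eq ab aa by blast
        qed
        have rb: "rel \<beta> \<beta>" "rel \<gamma> \<gamma>" using r rel_sym rel_refl by blast+
        have "X - {x\<in>X. same x \<beta> \<gamma>} \<in> \<omega>" using nr uf_compl[OF uf, of "{x\<in>X. same x \<beta> \<gamma>}"] unfolding rel_def by auto
        then have "{x\<in>X. same x \<beta> \<beta>} \<inter> {x\<in>X. same x \<gamma> \<gamma>} \<inter> (X - {x\<in>X. same x \<beta> \<gamma>}) \<in> \<omega>"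
          using uf_int[OF uf] rb unfolding rel_def by blast
        moreover have "{x\<in>X. same x \<beta> \<beta>} \<inter> {x\<in>X. same x \<gamma> \<gamma>} \<inter> (X - {x\<in>X. same x \<beta> \<gamma>})
            \<subseteq> {x\<in>Dr \<beta> \<inter> Dr \<gamma>. real m \<le> d (tr \<beta> x) (tr \<gamma> x)}"
        proof
          fix x assume "x \<in> {x\<in>X. same x \<beta> \<beta>} \<inter> {x\<in>X. same x \<gamma> \<gamma>} \<inter> (X - {x\<in>X. same x \<beta> \<gamma>})"
          then obtain B1 B2 where h: "x \<in> X" "x \<in> Dr \<beta>" "x \<in> Dr \<gamma>" "B1 \<in> PP x" "B2 \<in> PP x"
            "tr \<beta> x \<in> B1" "tr \<gamma> x \<in> B2" "\<not> same x \<beta> \<gamma>" unfolding same_def by auto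
          have "B1 \<noteq> B2" using h unfolding same_def by blast
          then have "real m \<le> d (tr \<beta> x) (tr \<gamma> x)" using PP3[OF h(1)] h(4-7) by blast
          then show "x \<in> {x\<in>Dr \<beta> \<inter> Dr \<gamma>. real m \<le> d (tr \<beta> x) (tr \<gamma> x)}" using h by auto
        qed
        moreover have "{x\<in>Dr \<beta> \<inter> Dr \<gamma>. real m \<le> d (tr \<beta> x) (tr \<gamma> x)} \<subseteq> X" using DrX r(3) by auto
        ultimately have "{x\<in>Dr \<beta> \<inter> Dr \<gamma>. real m \<le> d (tr \<beta> x) (tr \<gamma> x)} \<in> \<omega>" using uf_mono[OF uf] by blast
        then show "real m \<le> d_omega X d \<omega> \<beta> \<gamma>" using ul_ge[OF uf dwq[OF r(3,4)]] by blast
      qed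
      show "\<forall>A\<in>P. \<forall>x\<in>A. \<forall>y\<in>A. d_omega X d \<omega> x y \<le> real (f m)"
      proof (intro ballI)
        fix a \<beta> \<gamma> assume ab: "a \<in> P" "\<beta> \<in> a" "\<gamma> \<in> a"
        obtain \<alpha> where aa: "a = cls \<alpha>" using ab unfolding P_def by blast
        have r: "rel \<alpha> \<beta>" "rel \<alpha> \<gamma>" "\<beta> \<in> S" "\<gamma> \<in> S" using ab aa unfolding cls_def by auto
        have "rel \<beta> \<gamma>" using r rel_trans rel_sym by blast
        then have "{x\<in>X. same x \<beta> \<gamma>} \<in> \<omega>" unfolding rel_def .
        moreover have "{x\<in>X. same x \<beta> \<gamma>} \<subseteq> {x\<in>Dr \<beta> \<inter> Dr \<gamma>. d (tr \<beta> x) (tr \<gamma> x) \<le> real (f m)}"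
        proof
          fix x assume "x \<in> {x\<in>X. same x \<beta> \<gamma>}"
          then obtain B where h: "x \<in> X" "x \<in> Dr \<beta>" "x \<in> Dr \<gamma>" "B \<in> PP x" "tr \<beta> x \<in> B" "tr \<gamma> x \<in> B"
            unfolding same_def by auto
          then have "d (tr \<beta> x) (tr \<gamma> x) \<le> real (f m)" using PP4[OF h(1)] by blast
          then show "x \<in> {x\<in>Dr \<beta> \<inter> Dr \<gamma>. d (tr \<beta> x) (tr \<gamma> x) \<le> real (f m)}" using h by auto
        qed
        moreover have "{x\<in>Dr \<beta> \<inter> Dr \<gamma>. d (tr \<beta> x) (tr \<gamma> x) \<le> real (f m)} \<subseteq> X" using DrX r(3) by auto
        ultimately have "{x\<in>Dr \<beta> \<inter> Dr \<gamma>. d (tr \<beta> x) (tr \<gamma> x) \<le> real (f m)} \<in> \<omega>" using uf_mono[OF uf] by blast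
        then show "d_omega X d \<omega> \<beta> \<gamma> \<le> real (f m)" using ul_le[OF uf dwq[OF r(3,4)]] by blast
      qed
      show "ennreal c * emeasure \<mu> S \<le> emeasure \<mu> (\<Union>P)"
      proof -
        have fm: "finite_measure \<mu>" using s\<mu> by (intro finite_measureI) auto
        have \<Omega>S: "\<Omega> \<subseteq> S" unfolding \<Omega>_def by auto
        have key: "c * measure \<mu> (SK X d \<omega> K) \<le> measure \<mu> \<Omega> + measure \<mu> (S - SK X d \<omega> K)" for K
        proof -
          define G where "G = SK X d \<omega> K"
          have Gfin: "finite G" unfolding G_def using SK_finite[OF sp uf] .
          have GS: "G \<subseteq> S" unfolding G_def S_def using SK_sub .
          define W where "W \<alpha> = {x\<in>X. same x \<alpha> \<alpha>}" for \<alpha>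
          define V where "V \<alpha> = (if \<alpha> \<in> \<Omega> then W \<alpha> else X - W \<alpha>)" for \<alpha>
          have DV: "Dr \<alpha> \<inter> V \<alpha> \<in> \<omega>" if "\<alpha> \<in> G" for \<alpha>
          proof -
            have aS: "\<alpha> \<in> S" using that GS by auto
            have "V \<alpha> \<in> \<omega>"
            proof (cases "\<alpha> \<in> \<Omega>")
              case True then show ?thesis unfolding V_def W_def \<Omega>_def rel_def by simp
            next
              case False
              then have "W \<alpha> \<notin> \<omega>" using aS unfolding W_def \<Omega>_def rel_def by simp
              moreover have "W \<alpha> \<subseteq> X" unfolding W_def by auto
              ultimately have "X - W \<alpha> \<in> \<omega>" using uf_compl[OF uf] by blast
              then show ?thesis using False unfolding V_def by simp
            qed
            then show ?thesis using uf_int[OF uf rep(2)[OF aS]] by blast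
          qed
          have "X \<inter> (\<Inter>\<alpha>\<in>G. Dr \<alpha> \<inter> V \<alpha>) \<in> \<omega>" by (rule uf_Int_finite[OF uf Gfin DV])
          then have "X \<inter> (\<Inter>\<alpha>\<in>G. Dr \<alpha> \<inter> V \<alpha>) \<noteq> {}" using uf_empty[OF uf] by auto
          then obtain x where x0: "x \<in> X \<inter> (\<Inter>\<alpha>\<in>G. Dr \<alpha> \<inter> V \<alpha>)" by blast
          have xX: "x \<in> X" using x0 by auto
          have xG: "x \<in> Dr \<alpha>" "x \<in> V \<alpha>" if "\<alpha> \<in> G" for \<alpha> using x0 that by auto
          define \<Omega>' where "\<Omega>' = {\<alpha>\<in>A x. tr \<alpha> x \<in> \<Union>(PP x)}"
          have UPX: "\<Union>(PP x) \<subseteq> X" using PP1[OF xX] by auto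
          have e1: "emeasure (\<nu> x) X = emeasure \<mu> (A x)"
          proof -
            have "{\<alpha>\<in>A x. tr \<alpha> x \<in> X} = A x" unfolding A_def using trX by auto
            then show ?thesis using \<nu>em[of X x] by simp
          qed
          have e2: "emeasure (\<nu> x) (\<Union>(PP x)) = emeasure \<mu> \<Omega>'"
            unfolding \<Omega>'_def using \<nu>em[OF UPX] .
          have "ennreal c * emeasure \<mu> (A x) \<le> emeasure \<mu> \<Omega>'" using PP5[OF xX] e1 e2 by simp
          then have "ennreal c * ennreal (measure \<mu> (A x)) \<le> ennreal (measure \<mu> \<Omega>')"
            using finite_measure.emeasure_eq_measure[OF fm] by simp
          then have "ennreal (c * measure \<mu> (A x)) \<le> ennreal (measure \<mu> \<Omega>')"
            using ennreal_mult[of c "measure \<mu> (A x)"] assms(2) by simp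
          then have m1: "c * measure \<mu> (A x) \<le> measure \<mu> \<Omega>'" by (simp add: ennreal_le_iff)
          have GA: "G \<subseteq> A x" unfolding A_def using GS xG by auto
          have m2: "measure \<mu> G \<le> measure \<mu> (A x)"
            using finite_measure.finite_measure_mono[OF fm GA] AS[of x] s\<mu>(2) by simp
          have eqG: "\<Omega>' \<inter> G = \<Omega> \<inter> G"
          proof (intro equalityI subsetI)
            fix \<alpha> assume a: "\<alpha> \<in> \<Omega>' \<inter> G"
            then have "same x \<alpha> \<alpha>" unfolding \<Omega>'_def A_def same_def by auto
            then have "x \<in> W \<alpha>" unfolding W_def using xX by simp
            moreover have "x \<in> V \<alpha>" using xG a by auto
            ultimately have "\<alpha> \<in> \<Omega>" unfolding V_def by (cases "\<alpha> \<in> \<Omega>") auto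
            then show "\<alpha> \<in> \<Omega> \<inter> G" using a by simp
          next
            fix \<alpha> assume a: "\<alpha> \<in> \<Omega> \<inter> G"
            then have "x \<in> W \<alpha>" using xG[of \<alpha>] unfolding V_def by simp
            then have "same x \<alpha> \<alpha>" unfolding W_def by simp
            then show "\<alpha> \<in> \<Omega>' \<inter> G" using a GS unfolding \<Omega>'_def A_def same_def by auto
          qed
          have \<Omega>'S: "\<Omega>' \<subseteq> S" unfolding \<Omega>'_def A_def by auto
          have "\<Omega>' \<subseteq> (\<Omega> \<inter> G) \<union> (S - G)" using eqG \<Omega>'S by blast
          then have "measure \<mu> \<Omega>' \<le> measure \<mu> ((\<Omega> \<inter> G) \<union> (S - G))"
            by (rule finite_measure.finite_measure_mono[OF fm]) (use s\<mu>(2) \<Omega>S in auto)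
          also have "\<dots> = measure \<mu> (\<Omega> \<inter> G) + measure \<mu> (S - G)"
            by (rule finite_measure.finite_measure_Union[OF fm]) (use s\<mu>(2) \<Omega>S in auto)
          also have "measure \<mu> (\<Omega> \<inter> G) \<le> measure \<mu> \<Omega>"
            using finite_measure.finite_measure_mono[OF fm] s\<mu>(2) \<Omega>S by simp
          finally have m3: "measure \<mu> \<Omega>' \<le> measure \<mu> \<Omega> + measure \<mu> (S - G)" by simp
          have "c * measure \<mu> G \<le> c * measure \<mu> (A x)" using m2 assms(2) by simp
          then show ?thesis using m1 m3 unfolding G_def by linarith
        qed
        have inc: "incseq (SK X d \<omega>)" by (rule monoI) (rule SK_mono)
        have rng: "range (SK X d \<omega>) \<subseteq> sets \<mu>" using SK_sub[of X d \<omega>] s\<mu>(2) unfolding S_def by blast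
        have lim: "(\<lambda>K. measure \<mu> (SK X d \<omega> K)) \<longlonglongrightarrow> measure \<mu> S"
          using finite_measure.finite_Lim_measure_incseq[OF fm rng inc] unfolding SK_Union S_def .
        have diff: "measure \<mu> (S - SK X d \<omega> K) = measure \<mu> S - measure \<mu> (SK X d \<omega> K)" for K
          by (rule finite_measure.finite_measure_Diff[OF fm]) (use s\<mu>(2) SK_sub[of X d \<omega> K] in \<open>auto simp: S_def\<close>)
        have bound: "c * measure \<mu> (SK X d \<omega> K) + measure \<mu> (SK X d \<omega> K) \<le> measure \<mu> \<Omega> + measure \<mu> S" for K
          using key[of K] diff[of K] by linarith
        have lim2: "(\<lambda>K. c * measure \<mu> (SK X d \<omega> K) + measure \<mu> (SK X d \<omega> K)) \<longlonglongrightarrow> c * measure \<mu> S + measure \<mu> S"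
          by (intro tendsto_add tendsto_mult_left lim)
        have "c * measure \<mu> S + measure \<mu> S \<le> measure \<mu> \<Omega> + measure \<mu> S"
          by (rule LIMSEQ_le_const2[OF lim2]) (use bound in blast)
        then have r: "c * measure \<mu> S \<le> measure \<mu> \<Omega>" by simp
        have "ennreal c * emeasure \<mu> S = ennreal (c * measure \<mu> S)"
          using finite_measure.emeasure_eq_measure[OF fm] ennreal_mult[of c "measure \<mu> S"] assms(2) by simp
        also have "\<dots> \<le> ennreal (measure \<mu> \<Omega>)" using r by (rule ennreal_leI)
        also have "\<dots> = emeasure \<mu> (\<Union>P)" using finite_measure.emeasure_eq_measure[OF fm] UP by simp
        finally show ?thesis .
      qed
    qed
  qed
qed

end
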